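(* Let $P$ be an $n\times n$ doubly stochastic matrix all of whose diagonal entries are positive. If $P$ is SIA, then $P$ is a Sarymsakov matrix (i.e., $P\in\mathcal S_1$).
   Context: $\mathcal N=\{1,\ldots,n\}$. A matrix is stochastic if it is entrywise nonnegative with row sums $1$, and doubly stochastic if in addition its column sums are $1$. A stochastic $P$ is SIA if $\lim_{m\to\infty}P^m=\mathbf 1c^T$ for some nonnegative $c$ with entries summing to $1$. For stochastic $P$ and $\mathcal A\subseteq\mathcal N$, $F_P(\mathcal A)=\{j:\ p_{ij}>0\text{ for some } i\in\mathcal A\}$. A Sarymsakov matrix is a stochastic $P$ such that for any disjoint nonempty $\mathcal A,\tilde{\mathcal A}\subseteq\mathcal N$, either $F_P(\mathcal A)\cap F_P(\tilde{\mathcal A})\neq\emptyset$, or $F_P(\mathcal A)\cap F_P(\tilde{\mathcal A})=\emptyset$ and $|F_P(\mathcal A)\cup F_P(\tilde{\mathcal A})|>|\mathcal A\cup\tilde{\mathcal A}|$. *)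

theory Defs
  imports "HOL-Analysis.Analysis"
begin

text \<open>n x n real matrices are modelled as real^'n^'n with 'n a finite index type
  (the index set N = UNIV, n = CARD('n)).\<close>

definition stochastic :: "real^'n::finite^'n \<Rightarrow> bool" where
  "stochastic P \<longleftrightarrow> (\<forall>i j. P $ i $ j \<ge> 0) \<and> (\<forall>i. (\<Sum>j\<in>UNIV. P $ i $ j) = 1)"

definition doubly_stochastic :: "real^'n::finite^'n \<Rightarrow> bool" where
  "doubly_stochastic P \<longleftrightarrow> stochastic P \<and> (\<forall>j. (\<Sum>i\<in>UNIV. P $ i $ j) = 1)"

definition matpow :: "real^'n::finite^'n \<Rightarrow> nat \<Rightarrow> real^'n^'n" where
  "matpow P m = ((\<lambda>A. A ** P) ^^ m) (mat 1)"

definition SIA :: "real^'n::finite^'n \<Rightarrow> bool" where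
  "SIA P \<longleftrightarrow> stochastic P \<and>
     (\<exists>c :: real^'n. (\<forall>j. c $ j \<ge> 0) \<and> (\<Sum>j\<in>UNIV. c $ j) = 1 \<and>
        (\<lambda>m. matpow P m) \<longlonglongrightarrow> (\<chi> i j. c $ j))"

definition F_set :: "real^'n::finite^'n \<Rightarrow> 'n set \<Rightarrow> 'n set" where
  "F_set P A = {j. \<exists>i\<in>A. P $ i $ j > 0}"

definition sarymsakov :: "real^'n::finite^'n \<Rightarrow> bool" where
  "sarymsakov P \<longleftrightarrow> stochastic P \<and>
     (\<forall>A B :: 'n set. A \<noteq> {} \<longrightarrow> B \<noteq> {} \<longrightarrow> A \<inter> B = {} \<longrightarrow>
        F_set P A \<inter> F_set P B \<noteq> {} \<or>
        (F_set P A \<inter> F_set P B = {} \<and> card (F_set P A \<union> F_set P B) > card (A \<union> B)))"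

end

theory Submission
  imports Defs
begin

lemma closed_both:
  fixes P :: "real^'n::finite^'n"
  assumes ds: "doubly_stochastic P"
    and cl: "\<forall>i\<in>A. \<forall>j. j \<notin> A \<longrightarrow> P $ i $ j = 0"
  shows "\<forall>i j. i \<notin> A \<longrightarrow> j \<in> A \<longrightarrow> P $ i $ j = 0"
proof -
  have nn: "\<And>i j. P $ i $ j \<ge> 0" and rs: "\<And>i. (\<Sum>j\<in>UNIV. P $ i $ j) = 1"
    and cs: "\<And>j. (\<Sum>i\<in>UNIV. P $ i $ j) = 1"
    using ds unfolding doubly_stochastic_def stochastic_def by auto
  have r: "\<And>i. i \<in> A \<Longrightarrow> (\<Sum>j\<in>A. P $ i $ j) = 1"
  proof -
    fix i assume i: "i \<in> A"
    have "(\<Sum>j\<in>UNIV. P $ i $ j) = (\<Sum>j\<in>A. P $ i $ j)"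
      by (rule sum.mono_neutral_right) (use cl i in auto)
    thus "(\<Sum>j\<in>A. P $ i $ j) = 1" using rs by simp
  qed
  have split: "\<And>j. (\<Sum>i\<in>UNIV. P $ i $ j) = (\<Sum>i\<in>A. P $ i $ j) + (\<Sum>i\<in>-A. P $ i $ j)"
    by (metis Compl_eq_Diff_UNIV add.commute finite sum.subset_diff top_greatest)
  have "(\<Sum>j\<in>A. \<Sum>i\<in>UNIV. P $ i $ j) = real (card A)" using cs by simp
  moreover have "(\<Sum>j\<in>A. \<Sum>i\<in>A. P $ i $ j) = real (card A)"
    using r by (simp add: sum.swap[of _ A A])
  ultimately have "(\<Sum>j\<in>A. \<Sum>i\<in>-A. P $ i $ j) = 0"
    using split by (simp add: sum.distrib)
  hence "\<forall>j\<in>A. (\<Sum>i\<in>-A. P $ i $ j) = 0"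
    by (subst (asm) sum_nonneg_eq_0_iff) (auto intro: sum_nonneg nn)
  hence "\<forall>j\<in>A. \<forall>i\<in>-A. P $ i $ j = 0"
    by (simp add: sum_nonneg_eq_0_iff nn)
  thus ?thesis by auto
qed

lemma matpow_block:
  fixes P :: "real^'n::finite^'n"
  assumes "\<forall>i j. (i \<in> A) \<noteq> (j \<in> A) \<longrightarrow> P $ i $ j = 0"
  shows "(i \<in> A) \<noteq> (j \<in> A) \<Longrightarrow> matpow P m $ i $ j = 0"
proof (induction m arbitrary: i j)
  case 0
  then show ?case by (auto simp: matpow_def mat_def)
next
  case (Suc m)
  have "matpow P (Suc m) = matpow P m ** P" by (simp add: matpow_def)
  hence "matpow P (Suc m) $ i $ j = (\<Sum>k\<in>UNIV. matpow P m $ i $ k * P $ k $ j)"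
    by (simp add: matrix_matrix_mult_def)
  also have "\<dots> = 0"
  proof (rule sum.neutral, rule ballI)
    fix k
    show "matpow P m $ i $ k * P $ k $ j = 0"
    proof (cases "(i \<in> A) = (k \<in> A)")
      case True
      then show ?thesis using assms Suc.prems by auto
    next
      case False
      then show ?thesis using Suc.IH by auto
    qed
  qed
  finally show ?case .
qed

theorem proposition3:
  fixes P :: "real^'n::finite^'n"
  assumes "doubly_stochastic P"
    and "\<forall>i. P $ i $ i > 0"
    and "SIA P"
  shows "sarymsakov P"
proof -
  have st: "stochastic P" using assms(1) by (simp add: doubly_stochastic_def)
  obtain c :: "real^'n" where c: "(\<Sum>j\<in>UNIV. c $ j) = 1"
    and lim: "(\<lambda>m. matpow P m) \<longlonglongrightarrow> (\<chi> i j. c $ j)"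
    using assms(3) unfolding SIA_def by blast
  have sub: "\<And>A. A \<subseteq> F_set P A" using assms(2) by (auto simp: F_set_def)
  have noclosed: False if A: "A \<noteq> {}" "- A \<noteq> {}" and FA: "F_set P A = A" for A
  proof -
    have cl: "\<forall>i\<in>A. \<forall>j. j \<notin> A \<longrightarrow> P $ i $ j = 0"
    proof (intro ballI allI impI)
      fix i j assume "i \<in> A" "j \<notin> A"
      have "\<not> P $ i $ j > 0"
      proof
        assume "P $ i $ j > 0"
        hence "j \<in> F_set P A" using \<open>i \<in> A\<close> unfolding F_set_def by blast
        thus False using FA \<open>j \<notin> A\<close> by simp
      qed
      hence "P $ i $ j \<le> 0" by simp
      moreover have "P $ i $ j \<ge> 0" using st by (simp add: stochastic_def)
      ultimately show "P $ i $ j = 0" by simp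
    qed
    have cl2: "\<forall>i j. i \<notin> A \<longrightarrow> j \<in> A \<longrightarrow> P $ i $ j = 0"
      by (rule closed_both[OF assms(1) cl])
    have blk: "\<forall>i j. (i \<in> A) \<noteq> (j \<in> A) \<longrightarrow> P $ i $ j = 0"
    proof (intro allI impI)
      fix i j assume ij: "(i \<in> A) \<noteq> (j \<in> A)"
      show "P $ i $ j = 0"
      proof (cases "i \<in> A")
        case True
        hence "j \<notin> A" using ij by simp
        thus ?thesis using cl True by simp
      next
        case False
        hence "j \<in> A" using ij by simp
        thus ?thesis using cl2 False by simp
      qed
    qed
    have cz: "c $ j = 0" for j
    proof -
      obtain i where i: "(i \<in> A) \<noteq> (j \<in> A)"
      proof (cases "j \<in> A")
        case True
        then obtain i where "i \<in> - A" using A(2) by blast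
        thus ?thesis using that True by simp
      next
        case False
        then obtain i where "i \<in> A" using A(1) by blast
        thus ?thesis using that False by simp
      qed
      have "(\<lambda>m. matpow P m $ i $ j) \<longlonglongrightarrow> (\<chi> i j. c $ j) $ i $ j"
        by (intro tendsto_vec_nth lim)
      hence "(\<lambda>m. matpow P m $ i $ j) \<longlonglongrightarrow> c $ j" by simp
      moreover have "(\<lambda>m. matpow P m $ i $ j) = (\<lambda>m. 0)"
        using matpow_block[OF blk i] by auto
      ultimately have "(\<lambda>m. 0::real) \<longlonglongrightarrow> c $ j" by simp
      from LIMSEQ_unique[OF tendsto_const this] show ?thesis by simp
    qed
    show False using c cz by simp
  qed
  show ?thesis unfolding sarymsakov_def
  proof (intro conjI st allI impI)
    fix A B :: "'n set"
    assume A: "A \<noteq> {}" and B: "B \<noteq> {}" and AB: "A \<inter> B = {}"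
    show "F_set P A \<inter> F_set P B \<noteq> {} \<or>
        (F_set P A \<inter> F_set P B = {} \<and> card (F_set P A \<union> F_set P B) > card (A \<union> B))"
    proof (cases "F_set P A \<inter> F_set P B = {}")
      case False then show ?thesis by simp
    next
      case True
      have cA: "card A \<le> card (F_set P A)" using sub by (intro card_mono) auto
      have cB: "card B \<le> card (F_set P B)" using sub by (intro card_mono) auto
      have u1: "card (F_set P A \<union> F_set P B) = card (F_set P A) + card (F_set P B)"
        using True by (simp add: card_Un_disjoint)
      have u2: "card (A \<union> B) = card A + card B" using AB by (simp add: card_Un_disjoint)
      have "card (A \<union> B) < card (F_set P A \<union> F_set P B)"
      proof (rule ccontr)
        assume "\<not> ?thesis"
        hence "card (F_set P A) = card A" using cA cB u1 u2 by simp
        hence "F_set P A = A" using sub[of A]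
          by (metis card_subset_eq finite)
        moreover have "- A \<noteq> {}" using B AB by auto
        ultimately show False using noclosed A by blast
      qed
      thus ?thesis using True by simp
    qed
  qed
qed

end
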